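(* Let $T$ be a tree with root $r$, edges directed towards $r$, edge set $E$, and let $B,R$ be disjoint sets of leaves of $T$. For every $Y\subseteq E$, the set $\bar b(Y)$ is legal for the function $c:V(T)\to\mathbb{Z}$, $c(v)=A(v,Y)$.
   Context: Edges are ordered pairs $st$ pointing from $s$ to $t$, directed towards $r$; a leaf is a vertex with no incoming edges. For an edge set $X$, $V(X)$ is the set of vertices incident with an edge of $X$. $A(v,X)$ is the number of edges of $X$ pointing to $v$ minus the number of edges of $X$ pointing away from $v$, and $A(v,X,Y)=A(v,X)-A(v,Y)$. The \emph{blue overflow} $\bar b(Y)$ of $Y\subseteq E$ is defined by transfinite recursion: $Y_0$ is the set of all edges in $E\setminus Y$ whose starting vertex is in $B$; at a successor $\alpha=\beta+1$, if every $st\in E\setminus(Y\cup Y_\beta)$ satisfies $A(s,Y_\beta,Y)\le 0$, stop and set $\bar b(Y)=Y_\beta$; otherwise pick some $st\in E\setminus (Y\cup Y_\beta)$ with $A(s,Y_\beta,Y)\ge 1$ and let $Y_\alpha=Y_\beta\cup\{st\}$; at limits $Y_\alpha=\bigcup_{\beta<\alpha}Y_\beta$. (The result does not depend on the choices made.) A \emph{leafless forest} is an edge set $S$ such that the subforest $(V(S),S)$ of $T$ has no leaf (i.e. no vertex without an incoming edge of $S$). Given an edge set $X$ and $c:V(T)\to\mathbb{Z}$, a subset $S\subseteq X$ is \emph{illegal} for $c$ if $S$ is a leafless forest and $A(s,X\setminus S)\le c(s)$ for all $st\in S$. $X$ is \emph{legal} for $c$ if no nonempty subset of $X$ is illegal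 for $c$. *)

theory Defs
  imports Main
begin

text \<open>Edges are ordered pairs (s,t) pointing from s to t.\<close>

definition rooted_tree :: "'v set \<Rightarrow> ('v \<times> 'v) set \<Rightarrow> 'v \<Rightarrow> bool" where
  "rooted_tree V E r \<longleftrightarrow>
     E \<subseteq> V \<times> V \<and> r \<in> V \<and>
     (\<forall>v\<in>V - {r}. \<exists>!t. (v, t) \<in> E) \<and>
     (\<forall>t. (r, t) \<notin> E) \<and>
     (\<forall>v\<in>V. (v, r) \<in> E\<^sup>*)"

text \<open>Each vertex has finitely many incoming edges (so that the counts A(v,X) are integers).\<close>
definition locally_finite :: "'v set \<Rightarrow> ('v \<times> 'v) set \<Rightarrow> bool" where
  "locally_finite V E \<longleftrightarrow> (\<forall>v\<in>V. finite {s. (s, v) \<in> E})"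

definition is_leaf :: "('v \<times> 'v) set \<Rightarrow> 'v \<Rightarrow> bool" where
  "is_leaf E v \<longleftrightarrow> (\<forall>s. (s, v) \<notin> E)"

definition verts :: "('v \<times> 'v) set \<Rightarrow> 'v set" where
  "verts X = fst ` X \<union> snd ` X"

definition A :: "'v \<Rightarrow> ('v \<times> 'v) set \<Rightarrow> int" where
  "A v X = int (card {e\<in>X. snd e = v}) - int (card {e\<in>X. fst e = v})"

definition A2 :: "'v \<Rightarrow> ('v \<times> 'v) set \<Rightarrow> ('v \<times> 'v) set \<Rightarrow> int" where
  "A2 v X Y = A v X - A v Y"

text \<open>Stages Y_alpha of the transfinite recursion defining the blue overflow (any choices).\<close>
inductive bo_stage :: "('v \<times> 'v) set \<Rightarrow> 'v set \<Rightarrow> ('v \<times> 'v) set \<Rightarrow> ('v \<times> 'v) set \<Rightarrow> bool"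
  for E B Y where
  base: "bo_stage E B Y {e \<in> E - Y. fst e \<in> B}"
| step: "bo_stage E B Y Z \<Longrightarrow> (s, t) \<in> E - (Y \<union> Z) \<Longrightarrow> A2 s Z Y \<ge> 1
          \<Longrightarrow> bo_stage E B Y (insert (s, t) Z)"
| limit: "C \<noteq> {} \<Longrightarrow> Complete_Partial_Order.chain (\<subseteq>) C \<Longrightarrow> (\<forall>Z\<in>C. bo_stage E B Y Z)
          \<Longrightarrow> bo_stage E B Y (\<Union>C)"

definition blue_overflow :: "('v \<times> 'v) set \<Rightarrow> 'v set \<Rightarrow> ('v \<times> 'v) set \<Rightarrow> ('v \<times> 'v) set" where
  "blue_overflow E B Y = (THE Z. bo_stage E B Y Z \<and>
      (\<forall>(s, t) \<in> E - (Y \<union> Z). A2 s Z Y \<le> 0))"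

definition leafless_forest :: "('v \<times> 'v) set \<Rightarrow> ('v \<times> 'v) set \<Rightarrow> bool" where
  "leafless_forest E S \<longleftrightarrow> S \<subseteq> E \<and> (\<forall>v\<in>verts S. \<exists>s. (s, v) \<in> S)"

definition illegal :: "('v \<times> 'v) set \<Rightarrow> ('v \<times> 'v) set \<Rightarrow> ('v \<Rightarrow> int) \<Rightarrow> ('v \<times> 'v) set \<Rightarrow> bool" where
  "illegal E X c S \<longleftrightarrow> S \<subseteq> X \<and> leafless_forest E S \<and>
     (\<forall>(s, t) \<in> S. A s (X - S) \<le> c s)"

definition legal :: "('v \<times> 'v) set \<Rightarrow> ('v \<times> 'v) set \<Rightarrow> ('v \<Rightarrow> int) \<Rightarrow> bool" where
  "legal E X c \<longleftrightarrow> (\<forall>S. S \<subseteq> X \<and> S \<noteq> {} \<longrightarrow> \<not> illegal E X c S)"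

end

theory Submission
  imports Defs
begin

lemma out_unique:
  assumes "rooted_tree V E r" "(s,t) \<in> E" "(s,t') \<in> E"
  shows "t = t'"
proof -
  have "s \<in> V" "s \<noteq> r" using assms unfolding rooted_tree_def by auto
  then show ?thesis using assms unfolding rooted_tree_def by blast
qed

lemma in_finite:
  assumes "rooted_tree V E r" "locally_finite V E" "W \<subseteq> E"
  shows "finite {e\<in>W. snd e = s}"
proof (cases "s \<in> V")
  case True
  have "finite {x. (x,s) \<in> E}" using assms(2) True unfolding locally_finite_def by auto
  moreover have "{e\<in>W. snd e = s} \<subseteq> (\<lambda>x. (x,s)) ` {x. (x,s) \<in> E}" using assms(3) by force
  ultimately show ?thesis by (meson finite_imageI finite_subset)
next
  case False
  have "E \<subseteq> V \<times> V" using assms(1) unfolding rooted_tree_def by auto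
  then have "{e\<in>W. snd e = s} = {}" using False assms(3) by force
  then show ?thesis by (simp only: finite.emptyI)
qed

lemma A_le:
  assumes "rooted_tree V E r" "locally_finite V E" "Z \<subseteq> W" "W \<subseteq> E" "(s,t) \<in> E" "(s,t) \<notin> W"
  shows "A s Z \<le> A s W"
proof -
  have o: "{e\<in>Q. fst e = s} = {}" if "Q \<subseteq> W" for Q
  proof (rule ccontr)
    assume "{e\<in>Q. fst e = s} \<noteq> {}"
    then obtain e where e: "e \<in> Q" "fst e = s" by auto
    then have "(s, snd e) \<in> E" using that assms(4) by (metis prod.collapse subsetD)
    then have "snd e = t" using out_unique[OF assms(1) _ assms(5)] by blast
    then have "e = (s,t)" using e by (metis prod.collapse)
    then show False using e that assms(6) by auto
  qed
  have "card {e\<in>Z. snd e = s} \<le> card {e\<in>W. snd e = s}"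
    by (rule card_mono[OF in_finite[OF assms(1,2,4)]]) (use assms(3) in auto)
  moreover have "{e\<in>Z. fst e = s} = {}" "{e\<in>W. fst e = s} = {}" using o[OF assms(3)] o[of W] by auto
  ultimately have "int (card {e\<in>Z. fst e = s}) = 0" "int (card {e\<in>W. fst e = s}) = 0"
    "int (card {e\<in>Z. snd e = s}) \<le> int (card {e\<in>W. snd e = s})" by (simp_all only: card.empty of_nat_0 of_nat_le_iff)
  then show ?thesis unfolding A_def by linarith
qed

lemma stage_sub_E: "bo_stage E B Y Z \<Longrightarrow> Z \<subseteq> E"
  by (induction rule: bo_stage.induct) auto

lemma stage_base: "bo_stage E B Y Z \<Longrightarrow> {e\<in>E-Y. fst e\<in>B} \<subseteq> Z"
proof (induction rule: bo_stage.induct)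
  case (limit C)
  then obtain Z where "Z \<in> C" by auto
  then show ?case using limit by blast
qed auto

lemma stage_min:
  assumes "rooted_tree V E r" "locally_finite V E" "bo_stage E B Y Z" "W \<subseteq> E"
    "{e\<in>E-Y. fst e\<in>B} \<subseteq> W" "\<forall>(s,t)\<in>E-(Y\<union>W). A2 s W Y \<le> 0"
  shows "Z \<subseteq> W"
  using assms(3)
proof (induction rule: bo_stage.induct)
  case base
  then show ?case using assms(5) .
next
  case (step Z s t)
  have "(s,t) \<in> W"
  proof (rule ccontr)
    assume n: "(s,t) \<notin> W"
    then have "A2 s W Y \<le> 0" using assms(6) step by auto
    moreover have "A s Z \<le> A s W" using A_le[OF assms(1,2) step.IH assms(4)] step n by auto
    ultimately show False using step unfolding A2_def by simp
  qed
  then show ?case using step by auto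
next
  case (limit C)
  then show ?case by blast
qed

lemma stage_exists:
  "\<exists>Z. bo_stage E B Y Z \<and> (\<forall>(s, t) \<in> E - (Y \<union> Z). A2 s Z Y \<le> 0)"
proof -
  let ?A = "{Z. bo_stage E B Y Z}"
  have "\<exists>M\<in>?A. \<forall>X\<in>?A. M \<subseteq> X \<longrightarrow> X = M"
  proof (rule subset_Zorn_nonempty)
    show "?A \<noteq> {}" using bo_stage.base by blast
  next
    fix C assume "C \<noteq> {}" "subset.chain ?A C"
    then show "\<Union>C \<in> ?A"
      by (intro CollectI bo_stage.limit)
         (auto simp: subset.chain_def Complete_Partial_Order.chain_def)
  qed
  then obtain M where M: "bo_stage E B Y M" "\<forall>X\<in>?A. M \<subseteq> X \<longrightarrow> X = M" by auto
  have "\<forall>(s, t) \<in> E - (Y \<union> M). A2 s M Y \<le> 0"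
  proof (clarify, rule ccontr)
    fix s t assume st: "(s,t) \<in> E" "(s,t) \<notin> Y" "(s,t) \<notin> M" "\<not> A2 s M Y \<le> 0"
    then have "bo_stage E B Y (insert (s,t) M)" using bo_stage.step[OF M(1)] by auto
    then have "insert (s,t) M = M" using M(2) by blast
    then show False using st by auto
  qed
  then show ?thesis using M by blast
qed

theorem lemma2p7:
  fixes V :: "'v set" and E :: "('v \<times> 'v) set" and r :: 'v
    and B R :: "'v set" and Y :: "('v \<times> 'v) set"
  assumes "rooted_tree V E r"
    and "locally_finite V E"
    and "B \<subseteq> V" and "R \<subseteq> V" and "B \<inter> R = {}"
    and "\<forall>v\<in>B. is_leaf E v" and "\<forall>v\<in>R. is_leaf E v"
    and "Y \<subseteq> E"
  shows "legal E (blue_overflow E B Y) (\<lambda>v. A v Y)"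
proof -
  let ?P = "\<lambda>Z. bo_stage E B Y Z \<and> (\<forall>(s, t) \<in> E - (Y \<union> Z). A2 s Z Y \<le> 0)"
  have uniq: "Z1 = Z2" if "?P Z1" "?P Z2" for Z1 Z2
  proof -
    have s1: "bo_stage E B Y Z1" "bo_stage E B Y Z2" using that by auto
    have c1: "\<forall>(s, t) \<in> E - (Y \<union> Z1). A2 s Z1 Y \<le> 0" "\<forall>(s, t) \<in> E - (Y \<union> Z2). A2 s Z2 Y \<le> 0"
      using that by auto
    have "Z1 \<subseteq> Z2"
      by (rule stage_min[OF assms(1,2) s1(1) stage_sub_E[OF s1(2)] stage_base[OF s1(2)] c1(2)])
    moreover have "Z2 \<subseteq> Z1"
      by (rule stage_min[OF assms(1,2) s1(2) stage_sub_E[OF s1(1)] stage_base[OF s1(1)] c1(1)])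
    ultimately show ?thesis by auto
  qed
  obtain X where X: "?P X" using stage_exists[of E B Y] by blast
  have bX: "blue_overflow E B Y = X"
    unfolding blue_overflow_def by (rule the_equality[where P="?P", OF X uniq[OF _ X]])
  show ?thesis unfolding bX legal_def
  proof (intro allI impI notI)
    fix S assume S: "S \<subseteq> X \<and> S \<noteq> {}" and ill: "illegal E X (\<lambda>v. A v Y) S"
    have XE: "X \<subseteq> E" using stage_sub_E[of E B Y X] X by simp
    have nb: "S \<inter> {e\<in>E-Y. fst e\<in>B} = {}"
    proof (rule ccontr)
      assume "S \<inter> {e\<in>E-Y. fst e\<in>B} \<noteq> {}"
      then obtain s t where st: "(s,t) \<in> S" "s \<in> B" by fastforce
      then have "s \<in> verts S" unfolding verts_def by force
      then obtain s' where "(s',s) \<in> S" using ill unfolding illegal_def leafless_forest_def by blast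
      then have "(s',s) \<in> E" using S XE by blast
      then show False using assms(6) st unfolding is_leaf_def by blast
    qed
    have "X \<subseteq> X - S"
    proof (rule stage_min[OF assms(1,2)])
      show "bo_stage E B Y X" using X by blast
      show "X - S \<subseteq> E" using XE by blast
      show "{e\<in>E-Y. fst e\<in>B} \<subseteq> X - S" using stage_base[of E B Y X] X nb by blast
      have key: "A2 s (X-S) Y \<le> 0" if st: "(s,t) \<in> E" "(s,t) \<notin> Y" "(s,t) \<notin> X - S" for s t
      proof (cases "(s,t) \<in> S")
        case True
        have "\<forall>(s, t) \<in> S. A s (X - S) \<le> A s Y" using ill unfolding illegal_def by blast
        then have "A s (X - S) \<le> A s Y" using True by blast
        then show ?thesis unfolding A2_def by simp
      next
        case False
        then have "(s,t) \<notin> X" using st by auto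
        then have "(s,t) \<in> E - (Y \<union> X)" using st by simp
        then have "A2 s X Y \<le> 0" using X by fast
        moreover have "A s (X-S) \<le> A s X" using A_le[OF assms(1,2) _ XE st(1)] \<open>(s,t) \<notin> X\<close> by auto
        ultimately show ?thesis unfolding A2_def by simp
      qed
      then show "\<forall>(s,t)\<in>E-(Y\<union>(X-S)). A2 s (X-S) Y \<le> 0" by blast
    qed
    then show False using S by blast
  qed
qed

end
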